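(* For every integer constant $c\ge 1$ and every $h>1/2$ there is an instance with two groups of binary agents in which no allocation is $h$-democratic PROP$c$, and no allocation is $h$-democratic EF$c$.
   Context: There is a finite set $G$ of goods and two groups $A_1,A_2$ of agents, with $n_i\ge1$ agents in $A_i$. A binary agent has an additive utility $u_a$ with $u_a(\{g\})\in\{0,1\}$. An allocation is a partition $(G_1,G_2)$ of $G$; each agent of $A_i$ gets $u_a(G_i)$. For $a\in A_i$ and integer $c\ge0$: the allocation is EF$c$ for $a$ if for every $i'$ there is $C\subseteq G_{i'}$, $|C|\le c$, with $u_a(G_i)\ge u_a(G_{i'}\setminus C)$; it is PROP$c$ for $a$ if there is $C\subseteq G\setminus G_i$, $|C|\le c$, with $u_a(G_i)\ge\frac12 u_a(G\setminus C)$. An allocation is $h$-democratic fair if for each $i$ at least $h\cdot n_i$ agents of $A_i$ find it fair. *)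

theory Defs
  imports Complex_Main
begin

(* Goods and agents are represented by natural numbers; u a g is the utility
   of agent a for the single good g. *)

definition binary_utils :: "(nat \<Rightarrow> nat \<Rightarrow> nat) \<Rightarrow> nat set \<Rightarrow> nat set \<Rightarrow> bool" where
  "binary_utils u A G \<longleftrightarrow> (\<forall>a\<in>A. \<forall>g\<in>G. u a g \<in> {0, 1})"

definition util :: "(nat \<Rightarrow> nat \<Rightarrow> nat) \<Rightarrow> nat \<Rightarrow> nat set \<Rightarrow> real" where
  "util u a S = real (\<Sum>g\<in>S. u a g)"

definition is_allocation :: "nat set \<Rightarrow> nat set \<Rightarrow> nat set \<Rightarrow> bool" where
  "is_allocation G G1 G2 \<longleftrightarrow> G1 \<union> G2 = G \<and> G1 \<inter> G2 = {}"

(* EFc for agent a owning bundle Gi when the other group owns Go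
   (the condition for i' = i is trivial with C = {}) *)
definition EFc :: "nat \<Rightarrow> (nat \<Rightarrow> nat \<Rightarrow> nat) \<Rightarrow> nat \<Rightarrow> nat set \<Rightarrow> nat set \<Rightarrow> bool" where
  "EFc c u a Gi Go \<longleftrightarrow> (\<exists>C. C \<subseteq> Go \<and> card C \<le> c \<and> util u a Gi \<ge> util u a (Go - C))"

definition PROPc :: "nat \<Rightarrow> (nat \<Rightarrow> nat \<Rightarrow> nat) \<Rightarrow> nat \<Rightarrow> nat set \<Rightarrow> nat set \<Rightarrow> bool" where
  "PROPc c u a Gi Go \<longleftrightarrow>
     (\<exists>C. C \<subseteq> (Gi \<union> Go) - Gi \<and> card C \<le> c \<and> util u a Gi \<ge> (1/2) * util u a ((Gi \<union> Go) - C))"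

definition democratic_fair ::
  "(nat \<Rightarrow> nat set \<Rightarrow> nat set \<Rightarrow> bool) \<Rightarrow> real \<Rightarrow> nat set \<Rightarrow> nat set \<Rightarrow> nat set \<Rightarrow> nat set \<Rightarrow> bool" where
  "democratic_fair F h A1 A2 G1 G2 \<longleftrightarrow>
     real (card {a\<in>A1. F a G1 G2}) \<ge> h * real (card A1) \<and>
     real (card {a\<in>A2. F a G2 G1}) \<ge> h * real (card A2)"

end

theory Submission
  imports Defs "HOL-Library.Countable"
begin


lemma cb_step: "Suc n * ((2*Suc n) choose Suc n) = 2 * (2*n+1) * ((2*n) choose n)"
proof -
  have a: "(2*Suc n) choose Suc n = (Suc (2*n) choose n) + (Suc (2*n) choose Suc n)"
    by simp
  have s: "Suc (2*n) choose n = Suc (2*n) choose Suc n"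
    using binomial_symmetric[of "Suc n" "Suc (2*n)"] by simp
  have t: "Suc (2*n) * ((2*n) choose n) = (Suc (2*n) choose Suc n) * Suc n"
    by (rule Suc_times_binomial_eq)
  show ?thesis using a s t by (simp add: algebra_simps)
qed

lemma cb_bound: "((2*n) choose n)^2 * (2*n+1) \<le> 16^n"
proof (induction n)
  case 0 then show ?case by simp
next
  case (Suc n)
  define b where "b = (2*n) choose n"
  define b' where "b' = (2*Suc n) choose Suc n"
  have st: "Suc n * b' = 2*(2*n+1)*b" using cb_step unfolding b_def b'_def .
  have IH: "b^2*(2*n+1) \<le> 16^n" using Suc.IH b_def by simp
  have "(Suc n)^2 * (b'^2 * (2*Suc n+1)) = (Suc n * b')^2 * (2*n+3)"
    by (simp add: power2_eq_square algebra_simps)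
  also have "\<dots> = 4*(2*n+1)*(2*n+3) * (b^2*(2*n+1))" using st
    by (simp add: power2_eq_square algebra_simps)
  also have "\<dots> \<le> 4*(2*n+1)*(2*n+3) * 16^n" using IH by simp
  also have "\<dots> \<le> (Suc n)^2 * 16^Suc n"
  proof -
    have "(2*n+1)*(2*n+3) \<le> 4 * (Suc n)^2" by (simp add: power2_eq_square algebra_simps)
    then have "4*(2*n+1)*(2*n+3) * 16^n \<le> 4*(4*(Suc n)^2) * 16^n"
      by (metis mult.assoc mult_le_mono1 mult_le_mono2)
    then show ?thesis by (simp add: algebra_simps)
  qed
  finally have "(Suc n)^2 * (b'^2 * (2*Suc n+1)) \<le> (Suc n)^2 * 16^Suc n" .
  then have "b'^2 * (2*Suc n+1) \<le> 16^Suc n" by (simp del: power_Suc)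
  then show ?case unfolding b'_def .
qed

lemma util_ind:
  assumes "\<And>g. u a g = (if g \<in> S then 1 else 0)" "finite X"
  shows "util u a X = real (card (X \<inter> S))"
proof -
  have "(\<Sum>g\<in>X. u a g) = (\<Sum>g\<in>X. if g \<in> S then 1 else 0)" using assms(1) by simp
  also have "\<dots> = card (X \<inter> S)" using assms(2) by (simp add: sum.If_cases)
  finally show ?thesis unfolding util_def by simp
qed

lemma EFc_char:
  assumes "\<And>g. u a g = (if g \<in> S then 1 else 0)" "finite X" "finite Y"
  shows "EFc c u a X Y \<longleftrightarrow> card (Y \<inter> S) \<le> card (X \<inter> S) + c"
proof -
  have ui: "\<And>Z. finite Z \<Longrightarrow> util u a Z = real (card (Z \<inter> S))"
    by (rule util_ind) (use assms(1) in auto)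
  show ?thesis
proof
  assume "EFc c u a X Y"
  then obtain C where C: "C \<subseteq> Y" "card C \<le> c" "util u a X \<ge> util u a (Y - C)"
    unfolding EFc_def by blast
  have fC: "finite C" using C(1) assms(3) finite_subset by blast
  have "util u a X = real (card (X \<inter> S))" "util u a (Y - C) = real (card ((Y - C) \<inter> S))"
    using ui assms(2,3) by auto
  then have "card (X \<inter> S) \<ge> card ((Y - C) \<inter> S)" using C(3) by simp
  moreover have "Y \<inter> S \<subseteq> ((Y - C) \<inter> S) \<union> C" by blast
  then have "card (Y \<inter> S) \<le> card ((Y - C) \<inter> S) + card C"
    by (meson assms(3) card_Un_le card_mono fC finite_Diff finite_Int finite_UnI le_trans)
  ultimately show "card (Y \<inter> S) \<le> card (X \<inter> S) + c" using C(2) by linarith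
next
  assume H: "card (Y \<inter> S) \<le> card (X \<inter> S) + c"
  show "EFc c u a X Y"
  proof (cases "card (Y \<inter> S) \<le> c")
    case True
    have "(Y - Y \<inter> S) \<inter> S = {}" by blast
    then have "util u a (Y - Y \<inter> S) = 0" using ui assms(3) by simp
    moreover have "util u a X \<ge> 0" unfolding util_def by (rule of_nat_0_le_iff)
    ultimately have "util u a (Y - Y \<inter> S) \<le> util u a X" by linarith
    then show ?thesis unfolding EFc_def using True by (intro exI[of _ "Y \<inter> S"]) auto
  next
    case False
    have cle: "c \<le> card (Y \<inter> S)" using False by simp
    obtain C where C: "C \<subseteq> Y \<inter> S" "card C = c"
      using obtain_subset_with_card_n[OF cle] by blast
    have fC: "finite C" using C(1) assms(3) finite_subset by blast
    have "(Y - C) \<inter> S = (Y \<inter> S) - C" by blast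
    then have "card ((Y - C) \<inter> S) = card (Y \<inter> S) - c"
      using C fC by (simp add: card_Diff_subset)
    moreover have "util u a X = real (card (X \<inter> S))" "util u a (Y - C) = real (card ((Y - C) \<inter> S))"
      using ui assms(2,3) by auto
    ultimately have "util u a (Y - C) \<le> util u a X"
      using H by simp
    then show ?thesis unfolding EFc_def using C by (intro exI[of _ C]) auto
  qed
qed
qed

lemma PROPc_EFc:
  assumes "X \<inter> Y = {}" "finite X" "finite Y"
  shows "PROPc c u a X Y \<longleftrightarrow> EFc c u a X Y"
proof -
  have e: "(X \<union> Y) - X = Y" using assms by blast
  have add: "util u a (X \<union> Y - C) = util u a X + util u a (Y - C)" if "C \<subseteq> Y" for C
  proof -
    have "X \<union> Y - C = X \<union> (Y - C)" using that assms by blast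
    moreover have "X \<inter> (Y - C) = {}" using assms by blast
    ultimately show ?thesis unfolding util_def using assms
      by (simp add: sum.union_disjoint)
  qed
  have eq: "(1/2*util u a (X \<union> Y - C) \<le> util u a X) = (util u a (Y - C) \<le> util u a X)"
    if "C \<subseteq> Y" for C using add[OF that] by linarith
  show ?thesis unfolding PROPc_def EFc_def e
    using eq by blast
qed



lemma count_bound:
  assumes "G1 \<union> G2 = {..<N}" "G1 \<inter> G2 = {}"
  shows "card {S\<in>Pow {..<N}. card (G2 \<inter> S) \<le> card (G1 \<inter> S) + c}
       + card {S\<in>Pow {..<N}. card (G1 \<inter> S) \<le> card (G2 \<inter> S) + c}
       \<le> 2^N + (2*c+1) * (N choose (N div 2))"
proof -
  define P where "P = Pow {..<N::nat}"
  define F1 where "F1 = {S\<in>P. card (G2 \<inter> S) \<le> card (G1 \<inter> S) + c}"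
  define F2 where "F2 = {S\<in>P. card (G1 \<inter> S) \<le> card (G2 \<inter> S) + c}"
  have fP: "finite P" unfolding P_def by simp
  have cP: "card P = 2^N" unfolding P_def by (simp add: card_Pow)
  have fin1: "finite G1" "finite G2" using assms(1) by (metis finite_Un finite_lessThan)+
  have U: "F1 \<union> F2 = P" unfolding F1_def F2_def by auto
  have f1: "finite F1" "finite F2" using fP unfolding F1_def F2_def by auto
  have UI: "card F1 + card F2 = card (F1 \<union> F2) + card (F1 \<inter> F2)"
    using card_Un_Int[OF f1] .
  define \<phi> where "\<phi> S = (S \<inter> G1) \<union> (G2 - S)" for S
  define g2 where "g2 = card G2"
  have inj: "inj_on \<phi> P"
  proof (rule inj_onI)
    fix S T assume S: "S \<in> P" and T: "T \<in> P" and e: "\<phi> S = \<phi> T"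
    have rS: "S = (\<phi> S \<inter> G1) \<union> (G2 - \<phi> S)" using S assms unfolding P_def \<phi>_def by auto
    have rT: "T = (\<phi> T \<inter> G1) \<union> (G2 - \<phi> T)" using T assms unfolding P_def \<phi>_def by auto
    show "S = T" using rS rT e by simp
  qed
  have cphi: "card (\<phi> S) + card (G2 \<inter> S) = card (G1 \<inter> S) + g2" for S
  proof -
    have fa: "finite (S \<inter> G1)" "finite (G2 - S)" using fin1 by auto
    have "(S \<inter> G1) \<inter> (G2 - S) = {}" using assms(2) by blast
    then have "card (\<phi> S) = card (S \<inter> G1) + card (G2 - S)"
      unfolding \<phi>_def using fa card_Un_disjoint by blast
    moreover have "card (G2 - S) + card (G2 \<inter> S) = g2"
    proof -
      have "card (G2 - S) = card G2 - card (G2 \<inter> S)"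
        using fin1(2) by (simp add: card_Diff_subset_Int)
      moreover have "card (G2 \<inter> S) \<le> card G2" using fin1(2) by (simp add: card_mono)
      ultimately show ?thesis unfolding g2_def by simp
    qed
    ultimately show ?thesis by (simp add: Int_commute)
  qed
  define K where "K = {g2-c..g2+c}"
  define Q where "Q k = {T. T \<subseteq> {..<N} \<and> card T = k}" for k
  have sub: "\<phi> ` (F1 \<inter> F2) \<subseteq> (\<Union>k\<in>K. Q k)"
  proof
    fix T assume "T \<in> \<phi> ` (F1 \<inter> F2)"
    then obtain S where S: "S \<in> F1" "S \<in> F2" "T = \<phi> S" by blast
    have "T \<subseteq> {..<N}" using S(3) assms(1) unfolding \<phi>_def by auto
    moreover have "card T \<in> K"
      using S cphi[of S] unfolding K_def F1_def F2_def by auto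
    ultimately show "T \<in> (\<Union>k\<in>K. Q k)" unfolding Q_def by blast
  qed
  have "card (F1 \<inter> F2) = card (\<phi> ` (F1 \<inter> F2))"
    by (rule card_image[symmetric], rule inj_on_subset[OF inj]) (auto simp: F1_def)
  also have "\<dots> \<le> card (\<Union>k\<in>K. Q k)"
    by (rule card_mono[OF _ sub]) (auto simp: K_def Q_def)
  also have "\<dots> \<le> (\<Sum>k\<in>K. card (Q k))" by (rule card_UN_le) (simp add: K_def)
  also have "\<dots> \<le> (\<Sum>k\<in>K. N choose (N div 2))"
  proof (rule sum_mono)
    fix k assume "k \<in> K"
    have "card (Q k) = N choose k" unfolding Q_def using n_subsets[of "{..<N}" k] by simp
    then show "card (Q k) \<le> N choose (N div 2)" using binomial_maximum by simp
  qed
  also have "\<dots> = card K * (N choose (N div 2))" by simp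
  also have "\<dots> \<le> (2*c+1) * (N choose (N div 2))"
    by (rule mult_right_mono) (auto simp: K_def)
  finally have "card (F1 \<inter> F2) \<le> (2*c+1) * (N choose (N div 2))" .
  then show ?thesis using UI U cP unfolding F1_def F2_def P_def by simp
qed

lemma choose_n:
  fixes c :: nat and h :: real
  assumes "h > 1/2"
  shows "\<exists>n. real ((2*c+1) * ((2*n) choose n)) < (2*h-1) * 4^n"
proof -
  have hp: "2*h-1 > 0" using assms by simp
  obtain n :: nat where n: "real ((2*c+1)^2) / (2*h-1)^2 < real n"
    using reals_Archimedean2 by blast
  have q: "real ((2*c+1)^2) < (2*h-1)^2 * (2*n+1)"
  proof -
    have "real ((2*c+1)^2) < (2*h-1)^2 * n" using n hp by (simp add: field_simps)
    also have "\<dots> \<le> (2*h-1)^2 * (2*n+1)" using hp by (intro mult_left_mono) auto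
    finally show ?thesis .
  qed
  define B where "B = (2*n) choose n"
  have cb: "real (B^2 * (2*n+1)) \<le> 16^n" unfolding B_def
    using cb_bound[of n] by (metis of_nat_le_iff of_nat_numeral of_nat_power)
  have cb': "real (B^2) * (2*n+1) \<le> 16^n" using cb by (simp add: algebra_simps)
  have "real ((2*c+1)^2) * real (B^2) * (2*n+1) \<le> real ((2*c+1)^2) * 16^n"
    unfolding mult.assoc by (rule mult_left_mono[OF cb']) simp
  also have "\<dots> < (2*h-1)^2 * (2*n+1) * 16^n"
    using q by (intro mult_strict_right_mono) auto
  finally have lt: "real ((2*c+1)^2) * real (B^2) * (2*n+1) < ((2*h-1)^2 * 16^n) * (2*n+1)"
    by (simp add: mult.commute mult.left_commute)
  have "real ((2*c+1)^2) * real (B^2) < (2*h-1)^2 * 16^n"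
    using mult_less_cancel_right_pos[of "real (2*n+1)"] lt by simp
  moreover have "(real ((2*c+1) * B))^2 = real ((2*c+1)^2) * real (B^2)"
    by (simp only: of_nat_mult of_nat_power power_mult_distrib)
  moreover have "((2*h-1) * 4^n)^2 = (2*h-1)^2 * (16::real)^n"
  proof -
    have "(4::real)^n * 4^n = 16^n" by (simp flip: power_mult_distrib)
    then show ?thesis by (simp add: power2_eq_square algebra_simps)
  qed
  ultimately have "(real ((2*c+1) * B))^2 < ((2*h-1) * 4^n)^2" by simp
  then have "real ((2*c+1) * B) < (2*h-1) * 4^n"
    by (rule power_less_imp_less_base) (use hp in auto)
  then show ?thesis unfolding B_def by blast
qed

theorem mainTheorem5:
  fixes c :: nat and h :: real
  assumes "c \<ge> 1" and "h > 1/2"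
  shows "\<exists>(G::nat set) (A1::nat set) (A2::nat set) (u::nat \<Rightarrow> nat \<Rightarrow> nat).
           finite G \<and> finite A1 \<and> finite A2 \<and> A1 \<noteq> {} \<and> A2 \<noteq> {} \<and> A1 \<inter> A2 = {} \<and>
           binary_utils u (A1 \<union> A2) G \<and>
           (\<forall>G1 G2. is_allocation G G1 G2 \<longrightarrow>
              \<not> democratic_fair (\<lambda>a Gi Go. PROPc c u a Gi Go) h A1 A2 G1 G2) \<and>
           (\<forall>G1 G2. is_allocation G G1 G2 \<longrightarrow>
              \<not> democratic_fair (\<lambda>a Gi Go. EFc c u a Gi Go) h A1 A2 G1 G2)"
proof -
  obtain n where n: "real ((2*c+1) * ((2*n) choose n)) < (2*h-1) * 4^n"
    using choose_n[OF assms(2)] by blast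
  define N where "N = 2*n"
  define B where "B = N choose (N div 2)"
  have NB: "real ((2*c+1) * B) < (2*h-1) * 2^N"
    using n unfolding B_def N_def by (simp add: power_mult)
  define P where "P = Pow {..<N}"
  define enc where "enc S = to_nat (sorted_list_of_set (S::nat set))" for S
  define e1 where "e1 S = 2 * enc S" for S
  define e2 where "e2 S = 2 * enc S + 1" for S
  define u where "u a g = (if \<exists>S\<in>P. (a = e1 S \<or> a = e2 S) \<and> g \<in> S then 1 else (0::nat))" for a g :: nat
  have fP: "finite P" unfolding P_def by simp
  have injenc: "inj_on enc P"
  proof (rule inj_onI)
    fix S T assume "S \<in> P" "T \<in> P" "enc S = enc T"
    then have "sorted_list_of_set S = sorted_list_of_set T" "finite S" "finite T"
      unfolding enc_def P_def using inj_to_nat by (auto dest: injD intro: finite_subset)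
    then show "S = T" by (metis sorted_list_of_set.set_sorted_key_list_of_set)
  qed
  have inj1: "inj_on e1 P" using injenc unfolding e1_def inj_on_def by auto
  have inj2: "inj_on e2 P" using injenc unfolding e2_def inj_on_def by auto
  have u1: "u (e1 S) g = (if g \<in> S then 1 else 0)" if "S \<in> P" for S g
  proof -
    have "(\<exists>T\<in>P. (e1 S = e1 T \<or> e1 S = e2 T) \<and> g \<in> T) \<longleftrightarrow> g \<in> S"
    proof
      assume "\<exists>T\<in>P. (e1 S = e1 T \<or> e1 S = e2 T) \<and> g \<in> T"
      then obtain T where T: "T \<in> P" "e1 S = e1 T \<or> e1 S = e2 T" "g \<in> T" by blast
      have "e1 S \<noteq> e2 T" unfolding e1_def e2_def by presburger
      then have "e1 S = e1 T" using T by blast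
      then have "S = T" using inj1 that T(1) by (meson inj_onD)
      then show "g \<in> S" using T by simp
    qed (use that in blast)
    then show ?thesis unfolding u_def by simp
  qed
  have u2: "u (e2 S) g = (if g \<in> S then 1 else 0)" if "S \<in> P" for S g
  proof -
    have "(\<exists>T\<in>P. (e2 S = e1 T \<or> e2 S = e2 T) \<and> g \<in> T) \<longleftrightarrow> g \<in> S"
    proof
      assume "\<exists>T\<in>P. (e2 S = e1 T \<or> e2 S = e2 T) \<and> g \<in> T"
      then obtain T where T: "T \<in> P" "e2 S = e1 T \<or> e2 S = e2 T" "g \<in> T" by blast
      have "e2 S \<noteq> e1 T" unfolding e1_def e2_def by presburger
      then have "e2 S = e2 T" using T by blast
      then have "S = T" using inj2 that T(1) by (meson inj_onD)
      then show "g \<in> S" using T by simp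
    qed (use that in blast)
    then show ?thesis unfolding u_def by simp
  qed
  define A1 where "A1 = e1 ` P"
  define A2 where "A2 = e2 ` P"
  have cA1: "card A1 = 2^N" unfolding A1_def using card_image[OF inj1] unfolding P_def
    by (simp add: card_Pow)
  have cA2: "card A2 = 2^N" unfolding A2_def using card_image[OF inj2] unfolding P_def
    by (simp add: card_Pow)
  have disj: "A1 \<inter> A2 = {}" unfolding A1_def A2_def e1_def e2_def by auto presburger
  have bin: "binary_utils u (A1 \<union> A2) {..<N}" unfolding binary_utils_def u_def by auto
  have key: "\<not> democratic_fair (\<lambda>a Gi Go. EFc c u a Gi Go) h A1 A2 G1 G2"
    if al: "is_allocation {..<N} G1 G2" for G1 G2
  proof
    assume df: "democratic_fair (\<lambda>a Gi Go. EFc c u a Gi Go) h A1 A2 G1 G2"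
    have a1: "G1 \<union> G2 = {..<N}" "G1 \<inter> G2 = {}" using al unfolding is_allocation_def by auto
    have fG: "finite G1" "finite G2" using a1(1) by (metis finite_Un finite_lessThan)+
    define F1 where "F1 = {S\<in>P. card (G2 \<inter> S) \<le> card (G1 \<inter> S) + c}"
    define F2 where "F2 = {S\<in>P. card (G1 \<inter> S) \<le> card (G2 \<inter> S) + c}"
    have s1: "{a\<in>A1. EFc c u a G1 G2} = e1 ` F1"
    proof -
      have "EFc c u (e1 S) G1 G2 \<longleftrightarrow> card (G2 \<inter> S) \<le> card (G1 \<inter> S) + c" if "S \<in> P" for S
        by (rule EFc_char) (use u1[OF that] fG in auto)
      then show ?thesis unfolding A1_def F1_def by auto
    qed
    have s2: "{a\<in>A2. EFc c u a G2 G1} = e2 ` F2"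
    proof -
      have "EFc c u (e2 S) G2 G1 \<longleftrightarrow> card (G1 \<inter> S) \<le> card (G2 \<inter> S) + c" if "S \<in> P" for S
        by (rule EFc_char) (use u2[OF that] fG in auto)
      then show ?thesis unfolding A2_def F2_def by auto
    qed
    have c1: "card {a\<in>A1. EFc c u a G1 G2} = card F1"
      unfolding s1 by (rule card_image, rule inj_on_subset[OF inj1]) (auto simp: F1_def)
    have c2: "card {a\<in>A2. EFc c u a G2 G1} = card F2"
      unfolding s2 by (rule card_image, rule inj_on_subset[OF inj2]) (auto simp: F2_def)
    have cb: "card F1 + card F2 \<le> 2^N + (2*c+1) * B"
      using count_bound[OF a1] unfolding F1_def F2_def P_def B_def .
    have "h * 2^N \<le> real (card F1)" "h * 2^N \<le> real (card F2)"
      using df c1 c2 cA1 cA2 unfolding democratic_fair_def by auto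
    then have "2*h*2^N \<le> real (card F1 + card F2)" by simp
    also have "\<dots> \<le> 2^N + real ((2*c+1)*B)" using cb
      by (metis of_nat_add of_nat_le_iff of_nat_numeral of_nat_power)
    finally show False using NB by (simp add: algebra_simps)
  qed
  show ?thesis
  proof (intro exI conjI allI impI)
    show "finite {..<N}" by simp
    show "finite A1" "finite A2" unfolding A1_def A2_def using fP by auto
    show "A1 \<noteq> {}" "A2 \<noteq> {}" unfolding A1_def A2_def P_def by auto
    show "A1 \<inter> A2 = {}" by (rule disj)
    show "binary_utils u (A1 \<union> A2) {..<N}" by (rule bin)
    fix G1 G2 assume al: "is_allocation {..<N} G1 G2"
    show "\<not> democratic_fair (\<lambda>a Gi Go. EFc c u a Gi Go) h A1 A2 G1 G2" using key[OF al] .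
    have a1: "G1 \<union> G2 = {..<N}" "G1 \<inter> G2 = {}" using al unfolding is_allocation_def by auto
    have fG: "finite G1" "finite G2" using a1(1) by (metis finite_Un finite_lessThan)+
    have "PROPc c u a G1 G2 = EFc c u a G1 G2" "PROPc c u a G2 G1 = EFc c u a G2 G1" for a
      using PROPc_EFc a1(2) fG by (auto simp: Int_commute)
    then show "\<not> democratic_fair (\<lambda>a Gi Go. PROPc c u a Gi Go) h A1 A2 G1 G2"
      using key[OF al] unfolding democratic_fair_def by simp
  qed
qed

end
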